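(* Let $p$ be an odd prime and let $q\in\mathbb{C}_p$ satisfy $|1-q|_p<p^{-1/(p-1)}$. Then for every integer $n\ge 0$, $$\left|\frac{2}{[2]_q}E_{n,q}+\sum_{j=0}^{p-1}(-1)^{j+1}[j]_q^n\right|_p\le 1,$$ i.e. this quantity is a $p$-adic integer.
   Context: $\mathbb{C}_p$ is the completion of an algebraic closure of $\mathbb{Q}_p$, with absolute value $|\cdot|_p$ normalized by $|p|_p=1/p$. For $x\in\mathbb{Z}_p$ put $[x]_q=\frac{1-q^x}{1-q}$ and $[x]_{-q}=\frac{1-(-q)^x}{1+q}$. For a function $f$ on $\mathbb{Z}_p$ the fermionic $p$-adic $q$-integral is $\int_{\mathbb{Z}_p}f(x)\,d\mu_{-q}(x)=\lim_{N\to\infty}\frac{1}{[p^N]_{-q}}\sum_{x=0}^{p^N-1}f(x)(-q)^x$. The $q$-Euler numbers are $E_{n,q}=\int_{\mathbb{Z}_p}[x]_q^n q^{-x}\,d\mu_{-q}(x)$; equivalently $\frac{2}{[2]_q}E_{n,q}=\lim_{N\to\infty}\sum_{x=0}^{p^N-1}(-1)^x[x]_q^n$. *)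

theory Defs
  imports Complex_Main "HOL-Computational_Algebra.Polynomial" "HOL-Computational_Algebra.Primes"
begin

text \<open>A model of C_p: a field K with an absolute value av such that
  av is a non-archimedean absolute value, it restricts to the p-adic absolute
  value on the integers (hence on Q), K is complete with respect to av,
  K is algebraically closed, and the elements algebraic over Q are dense in K.
  These properties characterise the completion of an algebraic closure of Q_p
  up to isometric isomorphism.\<close>

definition is_Cp :: "nat \<Rightarrow> ('a::field \<Rightarrow> real) \<Rightarrow> bool" where
  "is_Cp p av \<longleftrightarrow>
     (\<forall>x. av x \<ge> 0) \<and> (\<forall>x. av x = 0 \<longleftrightarrow> x = 0) \<and>
     (\<forall>x y. av (x * y) = av x * av y) \<and>
     (\<forall>x y. av (x + y) \<le> max (av x) (av y)) \<and>
     (\<forall>m::int. m \<noteq> 0 \<longrightarrow> av (of_int m) = real p powr (- real (multiplicity (int p) m))) \<and>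
     (\<forall>X::nat \<Rightarrow> 'a. (\<forall>e>0. \<exists>N. \<forall>m\<ge>N. \<forall>n\<ge>N. av (X m - X n) < e) \<longrightarrow>
         (\<exists>L. \<forall>e>0. \<exists>N. \<forall>n\<ge>N. av (X n - L) < e)) \<and>
     (\<forall>P::'a poly. degree P > 0 \<longrightarrow> (\<exists>x. poly P x = 0)) \<and>
     (\<forall>x. \<forall>e>0. \<exists>y. (\<exists>P::int poly. P \<noteq> 0 \<and> poly (map_poly of_int P) y = 0) \<and> av (x - y) < e)"

definition av_tendsto :: "('a::field \<Rightarrow> real) \<Rightarrow> (nat \<Rightarrow> 'a) \<Rightarrow> 'a \<Rightarrow> bool" where
  "av_tendsto av X L \<longleftrightarrow> (\<forall>e>0. \<exists>N. \<forall>n\<ge>N. av (X n - L) < e)"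

definition av_lim :: "('a::field \<Rightarrow> real) \<Rightarrow> (nat \<Rightarrow> 'a) \<Rightarrow> 'a" where
  "av_lim av X = (THE L. av_tendsto av X L)"

text \<open>q-numbers for natural arguments: [x]_q = (1 - q^x)/(1 - q), written as the
  polynomial 1 + q + ... + q^(x-1) so that the case q = 1 is covered.\<close>
definition qint :: "'a::field \<Rightarrow> nat \<Rightarrow> 'a" where
  "qint q x = (\<Sum>i<x. q ^ i)"

definition qint_neg :: "'a::field \<Rightarrow> nat \<Rightarrow> 'a" where
  "qint_neg q x = (1 - (- q) ^ x) / (1 + q)"

definition ferm_qint :: "('a::field \<Rightarrow> real) \<Rightarrow> nat \<Rightarrow> 'a \<Rightarrow> (nat \<Rightarrow> 'a) \<Rightarrow> 'a" where
  "ferm_qint av p q f = av_lim av (\<lambda>N. (1 / qint_neg q (p ^ N)) * (\<Sum>x<p ^ N. f x * (- q) ^ x))"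

definition qEuler :: "('a::field \<Rightarrow> real) \<Rightarrow> nat \<Rightarrow> 'a \<Rightarrow> nat \<Rightarrow> 'a" where
  "qEuler av p q n = ferm_qint av p q (\<lambda>x. qint q x ^ n * inverse q ^ x)"

end

theory Submission
  imports Defs
begin


lemma qint_add: "qint q (a + b) = qint q a + q ^ a * qint q b"
  by (induction b) (auto simp: qint_def algebra_simps power_add)

lemma qint_mult: "qint q (m * k) = qint q m * qint (q ^ m) k"
proof (induction k)
  case 0 then show ?case by (simp add: qint_def)
next
  case (Suc k)
  have "qint q (m * Suc k) = qint q (m*k + m)" by (simp add: algebra_simps)
  also have "\<dots> = qint q (m*k) + q^(m*k) * qint q m" by (rule qint_add)
  also have "\<dots> = qint q m * qint (q ^ m) (Suc k)"
    using Suc by (simp add: qint_def algebra_simps flip: power_mult)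
  finally show ?case .
qed

lemma qint_sub1: "(q - 1) * qint q m = q ^ m - 1"
  by (induction m) (auto simp: qint_def algebra_simps)

lemma qint_hockey: "qint (1 + s) m = (\<Sum>k<m. of_nat (m choose (k+1)) * s ^ k)"
proof (induction m)
  case 0 then show ?case by (simp add: qint_def)
next
  case (Suc m)
  have b: "(1 + s) ^ m = (\<Sum>k<Suc m. of_nat (m choose k) * s ^ k)"
    using binomial_ring[of s 1 m] by (simp add: add.commute lessThan_Suc_atMost)
  have "qint (1+s) (Suc m) = qint (1+s) m + (1+s)^m" by (simp add: qint_def)
  also have "\<dots> = (\<Sum>k<Suc m. of_nat (m choose (k+1)) * s ^ k) + (\<Sum>k<Suc m. of_nat (m choose k) * s ^ k)"
    using Suc b by (simp add: binomial_eq_0)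
  also have "\<dots> = (\<Sum>k<Suc m. of_nat (Suc m choose (k+1)) * s ^ k)"
    by (simp add: sum.distrib[symmetric] algebra_simps)
  finally show ?case .
qed

lemma sum_lessThan_add: "(\<Sum>x<a+(b::nat). f x) = (\<Sum>x<a. f x) + (\<Sum>y<b. f (y+a))"
  by (induction b) (simp_all add: algebra_simps)

lemma sum_split_blocks: "(\<Sum>x<k*(M::nat). f x) = (\<Sum>j<k. \<Sum>y<M. f (y + j*M))"
proof (induction k)
  case 0 then show ?case by simp
next
  case (Suc k)
  have "(\<Sum>x<Suc k*M. f x) = (\<Sum>x<k*M + M. f x)" by (simp add: algebra_simps)
  also have "\<dots> = (\<Sum>x<k*M. f x) + (\<Sum>y<M. f (y + k*M))"
    by (rule sum_lessThan_add)
  finally show ?case using Suc by simp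
qed

lemma sum_alt_odd: "odd p \<Longrightarrow> (\<Sum>j<p. (-1::'a::comm_ring_1) ^ j) = 1"
proof -
  assume "odd p"
  then obtain m where "p = 2*m+1" by (metis oddE)
  moreover have "(\<Sum>j<2*m+1. (-1::'a) ^ j) = 1"
    by (induction m) (auto simp: algebra_simps)
  ultimately show ?thesis by simp
qed




locale nav =
  fixes av :: "'a::field \<Rightarrow> real" and p :: nat
  assumes nonneg: "av x \<ge> 0" and zero: "av x = 0 \<longleftrightarrow> x = 0"
    and mult: "av (x * y) = av x * av y"
    and ultra: "av (x + y) \<le> max (av x) (av y)"
    and one: "av 1 = 1" and mone: "av (-1) = 1" and two: "av 2 = 1"
    and natle: "av (of_nat m) \<le> 1"
    and pdvd: "p dvd m \<Longrightarrow> av (of_nat m) \<le> 1 / real p"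
    and pgt: "p > 1"
begin

lemma av_uminus: "av (- x) = av x"
  using mult[of "-1" x] mone by simp

lemma av_diff_sym: "av (x - y) = av (y - x)"
  using av_uminus[of "x - y"] by simp

lemma av_zero[simp]: "av 0 = 0" using zero by simp

lemma ultra_diff: "av (x - y) \<le> max (av x) (av y)"
  using ultra[of x "-y"] av_uminus[of y] by simp

lemma ultra_le: "av x \<le> B \<Longrightarrow> av y \<le> B \<Longrightarrow> av (x + y) \<le> B"
  using ultra[of x y] by simp

lemma ultra_lt: "av x < B \<Longrightarrow> av y < B \<Longrightarrow> av (x + y) < B"
  using ultra[of x y] by simp

lemma ultra_eq: "av y < av x \<Longrightarrow> av (x + y) = av x"
proof -
  assume h: "av y < av x"
  have "av x = av ((x + y) + (- y))" by simp
  also have "\<dots> \<le> max (av (x+y)) (av y)" using ultra av_uminus by metis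
  finally have "av x \<le> av (x+y)" using h by simp
  with ultra[of x y] h show ?thesis by simp
qed

lemma av_power: "av (x ^ n) = av x ^ n"
  by (induction n) (simp_all add: one mult)

lemma av_neg1pow: "av ((-1) ^ n) = 1"
  by (simp add: av_power mone)

lemma av_inverse: "av (inverse x) = inverse (av x)"
proof (cases "x = 0")
  case False
  then have "av x * av (inverse x) = 1" using mult[of x "inverse x"] one by simp
  moreover have "av x \<noteq> 0" using False zero by simp
  ultimately show ?thesis by (metis inverse_unique)
qed simp

lemma av_divide: "av (x / y) = av x / av y"
  by (simp add: divide_inverse mult av_inverse)

lemma av_sum_le: "0 \<le> B \<Longrightarrow> (\<And>i. i \<in> A \<Longrightarrow> av (f i) \<le> B) \<Longrightarrow> av (sum f A) \<le> B"
proof (induction A rule: infinite_finite_induct)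
  case (insert x F)
  then show ?case by (simp add: ultra_le)
qed simp_all

lemma mult_le1: "av x \<le> 1 \<Longrightarrow> av y \<le> B \<Longrightarrow> av (x * y) \<le> B"
  by (simp add: mult) (metis mult_left_le_one_le mult_mono nonneg order_trans mult_1)

lemma pow_le1: "av x \<le> 1 \<Longrightarrow> av (x ^ n) \<le> 1"
  by (simp add: av_power power_le_one nonneg)

lemma qint_le1: "av q \<le> 1 \<Longrightarrow> av (qint q m) \<le> 1"
  unfolding qint_def by (rule av_sum_le) (auto simp: pow_le1)

lemma tendsto_unique: "av_tendsto av X L1 \<Longrightarrow> av_tendsto av X L2 \<Longrightarrow> L1 = L2"
proof (rule ccontr)
  assume h1: "av_tendsto av X L1" and h2: "av_tendsto av X L2" and ne: "L1 \<noteq> L2"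
  define e where "e = av (L1 - L2)"
  have e: "e > 0" using ne zero nonneg unfolding e_def by (metis less_eq_real_def right_minus_eq)
  obtain N1 where N1: "\<And>n. n \<ge> N1 \<Longrightarrow> av (X n - L1) < e" using h1 e unfolding av_tendsto_def by blast
  obtain N2 where N2: "\<And>n. n \<ge> N2 \<Longrightarrow> av (X n - L2) < e" using h2 e unfolding av_tendsto_def by blast
  have a: "av (X (max N1 N2) - L1) < e" "av (X (max N1 N2) - L2) < e" using N1 N2 by auto
  have "L1 - L2 = (X (max N1 N2) - L2) - (X (max N1 N2) - L1)" by simp
  then have "av (L1 - L2) \<le> max (av (X (max N1 N2) - L2)) (av (X (max N1 N2) - L1))"
    using ultra_diff by metis
  then show False using a unfolding e_def by simp
qed

lemma av_lim_eq: "av_tendsto av X L \<Longrightarrow> av_lim av X = L"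
  unfolding av_lim_def using tendsto_unique by blast

lemma qint_p_bound:
  assumes "prime p" "av (r - 1) \<le> 1"
  shows "av (qint r p) \<le> max (1 / real p) (av (r - 1) ^ (p - 1))"
proof -
  define s where "s = r - 1"
  have r: "r = 1 + s" unfolding s_def by simp
  have p1: "p = Suc (p - 1)" using pgt by simp
  have "qint r p = (\<Sum>k<Suc (p-1). of_nat (p choose (k+1)) * s ^ k)"
    unfolding r by (subst qint_hockey) (metis p1)
  also have "\<dots> = (\<Sum>k<p-1. of_nat (p choose (k+1)) * s ^ k) + of_nat (p choose (p-1+1)) * s ^ (p - 1)"
    by (rule sum.lessThan_Suc)
  also have "\<dots> = (\<Sum>k<p-1. of_nat (p choose (k+1)) * s ^ k) + s ^ (p - 1)"
    using pgt by simp
  finally have eq: "qint r p = \<dots>" .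
  have sle: "av s \<le> 1" using assms s_def by simp
  have "av (\<Sum>k<p-1. of_nat (p choose (k+1)) * s ^ k) \<le> 1 / real p"
  proof (rule av_sum_le)
    fix k assume "k \<in> {..<p-1}"
    then have "p dvd (p choose (k+1))" using assms(1) by (intro dvd_choose_prime) auto
    then have "av (of_nat (p choose (k+1))) \<le> 1 / real p" by (rule pdvd)
    then show "av (of_nat (p choose (k+1)) * s ^ k) \<le> 1 / real p"
      by (metis mult.commute mult_le1 pow_le1 sle)
  qed simp
  moreover have "av (s ^ (p-1)) = av (r - 1) ^ (p - 1)" by (simp add: av_power s_def)
  ultimately show ?thesis unfolding eq using ultra by (smt (verit))
qed

end



locale qctx = nav av p for av :: "'a::field \<Rightarrow> real" and p :: nat +
  fixes q :: 'a and n :: nat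
  assumes prime: "prime p" and oddp: "odd p" and hq: "av (q - 1) < 1"
begin

definition c where "c = max (1 / real p) (av (q - 1) ^ (p - 1))"
definition S where "S N = (\<Sum>x<p^N. (-1) ^ x * qint q x ^ n)"

lemma c_lt1: "c < 1" and c_nonneg: "0 \<le> c"
proof -
  have "av (q-1) ^ (p-1) < 1" using hq nonneg pgt by (simp add: power_less_one_iff)
  moreover have "1 / real p < 1" using pgt by simp
  ultimately show "c < 1" unfolding c_def by simp
  show "0 \<le> c" unfolding c_def by (rule order_trans[OF _ max.cobounded1]) simp
qed

lemma avq: "av q \<le> 1"
proof -
  have "q = 1 + (q - 1)" by simp
  then show ?thesis using ultra[of 1 "q-1"] one hq by (metis max.absorb1 less_imp_le)
qed

lemma qpow_sub1: "av (q ^ m - 1) \<le> av (q - 1)"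
proof -
  have "q ^ m - 1 = (q - 1) * qint q m" using qint_sub1 by metis
  then show ?thesis using qint_le1[OF avq, of m] by (simp add: mult nonneg mult_left_le)
qed

lemma cN_le1: "c ^ N \<le> 1" using c_lt1 c_nonneg by (simp add: power_le_one)

lemma qint_pN: "av (qint q (p ^ N)) \<le> c ^ N"
proof (induction N)
  case 0 then show ?case by (simp add: qint_def one)
next
  case (Suc N)
  define M where "M = p ^ N"
  have h1: "av (q ^ M - 1) \<le> av (q - 1)" by (rule qpow_sub1)
  then have h2: "av (q ^ M - 1) \<le> 1" using hq by simp
  have "av (qint (q^M) p) \<le> max (1 / real p) (av (q ^ M - 1) ^ (p - 1))"
    by (rule qint_p_bound[OF prime h2])
  also have "\<dots> \<le> c" unfolding c_def using h1 nonneg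
    by (intro max.mono power_mono) auto
  finally have h3: "av (qint (q^M) p) \<le> c" .
  have "qint q (p ^ Suc N) = qint q M * qint (q ^ M) p"
    unfolding M_def by (simp add: qint_mult[symmetric] mult.commute)
  then have "av (qint q (p ^ Suc N)) = av (qint q M) * av (qint (q^M) p)" by (simp add: mult)
  also have "\<dots> \<le> c ^ N * c" using Suc h3 nonneg c_nonneg unfolding M_def
    by (intro mult_mono) auto
  finally show ?case by (simp add: mult.commute)
qed

lemma powdiff: "av u \<le> 1 \<Longrightarrow> av v \<le> 1 \<Longrightarrow> av ((u + v) ^ k - u ^ k) \<le> av v"
proof -
  assume u: "av u \<le> 1" and v: "av v \<le> 1"
  have "(u + v) ^ k - u ^ k = ((u+v) - u) * (\<Sum>i<k. u^(k - Suc i) * (u+v)^i)"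
    by (rule power_diff_sumr2)
  also have "\<dots> = v * (\<Sum>i<k. u^(k - Suc i) * (u+v)^i)" by simp
  finally have e: "(u + v) ^ k - u ^ k = v * (\<Sum>i<k. u^(k - Suc i) * (u+v)^i)" .
  have uv: "av (u + v) \<le> 1" using u v by (rule ultra_le)
  have "av (\<Sum>i<k. u^(k - Suc i) * (u+v)^i) \<le> 1"
    by (rule av_sum_le) (auto intro!: mult_le1 pow_le1 u uv)
  then show ?thesis unfolding e using nonneg
    by (simp add: mult) (metis mult_left_le)
qed

lemma S_le1: "av (S N) \<le> 1"
  unfolding S_def by (rule av_sum_le) (auto intro!: mult_le1 pow_le1 qint_le1 avq simp: av_neg1pow mone)

lemma S_step: "av (S (Suc N) - S N) \<le> c ^ N"
proof -
  define M where "M = p ^ N"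
  have oddM: "odd M" unfolding M_def using oddp by simp
  define E where "E j y = (-1) ^ y * (qint q (y + j*M) ^ n - qint q y ^ n)" for j y
  have Ebound: "av (E j y) \<le> c ^ N" for j y
  proof -
    define v where "v = q ^ y * (qint q M * qint (q ^ M) j)"
    have qe: "qint q (y + j*M) = qint q y + v"
      unfolding v_def by (simp add: qint_add qint_mult[symmetric] mult.commute)
    have avqM: "av (q ^ M) \<le> 1" by (rule pow_le1[OF avq])
    have "av v \<le> c ^ N"
      unfolding v_def
      by (rule mult_le1[OF pow_le1[OF avq]]) (metis M_def mult.commute mult_le1 qint_le1 avqM qint_pN)
    moreover have "av (E j y) \<le> av v"
      unfolding E_def qe
      by (rule mult_le1) (auto simp: av_neg1pow intro!: powdiff qint_le1 avq
          order_trans[OF \<open>av v \<le> c^N\<close> cN_le1])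
    ultimately show ?thesis by simp
  qed
  have f: "(-1) ^ (y + j*M) * qint q (y + j*M) ^ n
      = (-1) ^ j * ((-1) ^ y * qint q y ^ n + E j y)" for j y
  proof -
    have "(-1::'a) ^ (j*M) = (-1) ^ j"
      using oddM by (simp add: power_mult_distrib mult.commute[of j] power_mult)
    then show ?thesis unfolding E_def by (simp add: power_add algebra_simps)
  qed
  have "S (Suc N) = (\<Sum>x<p*M. (-1) ^ x * qint q x ^ n)" unfolding S_def M_def by simp
  also have "\<dots> = (\<Sum>j<p. \<Sum>y<M. (-1) ^ (y + j*M) * qint q (y + j*M) ^ n)"
    by (rule sum_split_blocks)
  also have "\<dots> = (\<Sum>j<p. (-1) ^ j * (S N + (\<Sum>y<M. E j y)))"
    unfolding f S_def M_def[symmetric] by (intro sum.cong refl) (simp add: sum.distrib flip: sum_distrib_left)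
  also have "\<dots> = (\<Sum>j<p. (-1) ^ j) * S N + (\<Sum>j<p. (-1) ^ j * (\<Sum>y<M. E j y))"
    by (simp add: sum.distrib distrib_left sum_distrib_right)
  also have "\<dots> = S N + (\<Sum>j<p. (-1) ^ j * (\<Sum>y<M. E j y))"
    by (simp add: sum_alt_odd[OF oddp])
  finally have eq: "S (Suc N) - S N = (\<Sum>j<p. (-1) ^ j * (\<Sum>y<M. E j y))" by simp
  show ?thesis unfolding eq
    by (rule av_sum_le) (auto intro!: mult_le1 av_sum_le Ebound simp: av_neg1pow c_nonneg)
qed

lemma S_cauchy: "m \<ge> N \<Longrightarrow> av (S m - S N) \<le> c ^ N"
proof (induction m rule: dec_induct)
  case base then show ?case using c_nonneg by simp
next
  case (step m)
  have "S (Suc m) - S N = (S (Suc m) - S m) + (S m - S N)" by simp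
  moreover have "c ^ m \<le> c ^ N" using step(1) c_nonneg c_lt1 by (simp add: power_decreasing)
  ultimately show ?case using ultra_le S_step step(3) by (metis order_trans)
qed

lemma c_small: "e > 0 \<Longrightarrow> \<exists>N. \<forall>m\<ge>N. c ^ m < e"
proof -
  assume e: "e > 0"
  have "(\<lambda>m. c ^ m) \<longlonglongrightarrow> 0" using c_lt1 c_nonneg by (intro LIMSEQ_power_zero) simp
  then have "eventually (\<lambda>m. c ^ m < e) sequentially" using e by (rule order_tendstoD(2))
  then show ?thesis by (simp add: eventually_sequentially)
qed

end



context qctx begin

lemma q_ne0: "q \<noteq> 0"
  using hq mone by auto

lemma one_plus_small: "av (x - 1) < 1 \<Longrightarrow> av (1 + x) = 1"
proof -
  assume h: "av (x - 1) < 1"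
  have "1 + x = 2 + (x - 1)" by simp
  then show ?thesis using ultra_eq[of "x - 1" 2] h two by simp
qed

lemma main:
  assumes complete: "\<And>X::nat \<Rightarrow> 'a. (\<forall>e>0. \<exists>N. \<forall>m\<ge>N. \<forall>n\<ge>N. av (X m - X n) < e) \<Longrightarrow>
         (\<exists>L. \<forall>e>0. \<exists>N. \<forall>n\<ge>N. av (X n - L) < e)"
  shows "av (2 / qint q 2 * qEuler av p q n + (\<Sum>j<p. (- 1) ^ (j + 1) * qint q j ^ n)) \<le> 1"
proof -
  have "\<forall>e>0. \<exists>N. \<forall>m\<ge>N. \<forall>k\<ge>N. av (S m - S k) < e"
  proof (intro allI impI)
    fix e :: real assume "e > 0"
    then obtain N where N: "\<forall>m\<ge>N. c ^ m < e" using c_small by blast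
    show "\<exists>N. \<forall>m\<ge>N. \<forall>k\<ge>N. av (S m - S k) < e"
    proof (intro exI allI impI)
      fix m k assume m: "m \<ge> N" and k: "k \<ge> N"
      have "S m - S k = (S m - S N) - (S k - S N)" by simp
      moreover have "av (S m - S N) < e" using S_cauchy[OF m] N by (meson order.refl le_less_trans)
      moreover have "av (S k - S N) < e" using S_cauchy[OF k] N by (meson order.refl le_less_trans)
      ultimately show "av (S m - S k) < e" using ultra_diff by (metis max_less_iff_conj le_less_trans)
    qed
  qed
  then obtain L where L: "\<And>e. e > 0 \<Longrightarrow> \<exists>N. \<forall>k\<ge>N. av (S k - L) < e" using complete by blast
  have Lle: "av L \<le> 1"
  proof -
    obtain N where "av (S N - L) < 1" using L[of 1] by auto
    moreover have "L = S N - (S N - L)" by simp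
    ultimately show ?thesis using ultra_diff[of "S N" "S N - L"] S_le1[of N] by simp
  qed
  have q1: "av (1 + q) = 1" using one_plus_small hq by simp
  have q1ne: "1 + q \<noteq> 0" using q1 zero by force
  have two_ne: "(2::'a) \<noteq> 0" using two zero by force
  define T where "T N = (1 / qint_neg q (p ^ N)) * (\<Sum>x<p ^ N. (qint q x ^ n * inverse q ^ x) * (- q) ^ x)" for N
  define K where "K = (1 + q) / 2 * L"
  have QM: "av (q ^ (p ^ N) - 1) \<le> c ^ N" for N
  proof -
    have "q ^ (p^N) - 1 = (q - 1) * qint q (p^N)" using qint_sub1 by metis
    then show ?thesis using hq qint_pN[of N] nonneg
      by (simp add: mult) (metis less_imp_le mult_left_le_one_le order_trans)
  qed
  have TK: "T N - K = (1 + q) * ((2 * (S N - L) - L * (q ^ (p^N) - 1)) / (2 * (1 + q ^ (p^N))))" for N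
  proof -
    define M where "M = p ^ N"
    have oddM: "odd M" unfolding M_def using oddp by simp
    have qM: "av (1 + q ^ M) = 1"
      using one_plus_small qpow_sub1[of M] hq by (meson le_less_trans)
    have qMne: "1 + q ^ M \<noteq> 0" using qM zero by force
    have neg: "qint_neg q M = (1 + q ^ M) / (1 + q)"
      unfolding qint_neg_def using oddM by (simp add: power_minus_odd)
    have summ: "(\<Sum>x<M. (qint q x ^ n * inverse q ^ x) * (- q) ^ x) = S N"
      unfolding S_def M_def[symmetric]
    proof (intro sum.cong refl)
      fix x
      have "inverse q ^ x * (- q) ^ x = (-1) ^ x"
        using q_ne0 by (simp add: power_minus[of q] power_inverse field_simps)
      then show "qint q x ^ n * inverse q ^ x * (- q) ^ x = (- 1) ^ x * qint q x ^ n"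
        by (metis mult.assoc mult.commute)
    qed
    have "T N = (1 + q) / (1 + q ^ M) * S N"
      unfolding T_def M_def[symmetric] neg summ using q1ne qMne by simp
    moreover have "2 * (S N - L) - L * (q^M - 1) = 2 * S N - L * (1 + q^M)" by (simp add: algebra_simps)
    moreover have "\<And>D::'a. D \<noteq> 0 \<Longrightarrow> (1+q)/D * S N - (1+q)/2*L = (1+q)*((2 * S N - L*D)/(2*D))"
      using two_ne by (simp add: field_simps)
    ultimately show ?thesis unfolding K_def M_def[symmetric] using qMne by simp
  qed
  have tend: "av_tendsto av T K"
    unfolding av_tendsto_def
  proof (intro allI impI)
    fix e :: real assume e: "e > 0"
    obtain N1 where N1: "\<forall>k\<ge>N1. av (S k - L) < e" using L[OF e] by blast
    obtain N2 where N2: "\<forall>m\<ge>N2. c ^ m < e" using c_small e by blast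
    show "\<exists>N. \<forall>k\<ge>N. av (T k - K) < e"
    proof (intro exI allI impI)
      fix N assume N: "N \<ge> max N1 N2"
      define M where "M = p ^ N"
      have qM: "av (1 + q ^ M) = 1"
        using one_plus_small qpow_sub1[of M] hq by (meson le_less_trans)
      have a1: "av (2 * (S N - L)) < e" using N1 N mult[of 2 "S N - L"] two by simp
      have "av (L * (q ^ M - 1)) \<le> av (q ^ M - 1)" using Lle nonneg by (simp add: mult mult_left_le_one_le)
      also have "\<dots> \<le> c ^ N" unfolding M_def by (rule QM)
      also have "\<dots> < e" using N2 N by simp
      finally have a2: "av (L * (q ^ M - 1)) < e" .
      have num: "av (2 * (S N - L) - L * (q ^ M - 1)) < e"
        using ultra_diff a1 a2 by (metis max_less_iff_conj le_less_trans)
      show "av (T N - K) < e"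
      proof -
        have d: "av (2 * (1 + q ^ M)) = 1" using mult[of 2 "1 + q^M"] two qM by simp
        show ?thesis using num unfolding TK M_def[symmetric] mult[of "1+q"] av_divide d q1 by simp
      qed
    qed
  qed
  have E: "qEuler av p q n = K"
    unfolding qEuler_def ferm_qint_def T_def[symmetric] using av_lim_eq[OF tend] .
  have q2: "qint q 2 = 1 + q" by (simp add: qint_def numeral_2_eq_2)
  have "2 / qint q 2 * qEuler av p q n + (\<Sum>j<p. (- 1) ^ (j + 1) * qint q j ^ n) = L - S 1"
    unfolding E K_def q2 S_def using q1ne two_ne by (simp add: sum_negf)
  then show ?thesis using ultra_diff[of L "S 1"] Lle S_le1[of 1] by simp
qed

end



theorem corollary2:
  fixes av :: "'a::field \<Rightarrow> real" and p :: nat and q :: 'a and n :: nat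
  assumes "prime p" and "odd p" and "is_Cp p av"
    and "av (1 - q) < real p powr (- 1 / (real p - 1))"
  shows "av (2 / qint q 2 * qEuler av p q n
             + (\<Sum>j<p. (- 1) ^ (j + 1) * qint q j ^ n)) \<le> 1"
proof -
  note C = assms(3)[unfolded is_Cp_def]
  have p1: "p > 1" using assms(1) prime_gt_1_nat by blast
  have p3: "p \<ge> 3" using p1 assms(2) by presburger
  have avint: "\<And>m::int. m \<noteq> 0 \<Longrightarrow> av (of_int m) = real p powr (- real (multiplicity (int p) m))"
    using C by blast
  have unit: "av (of_int m) = 1" if "\<not> int p dvd m" for m :: int
  proof -
    have "m \<noteq> 0" using that by auto
    then show ?thesis using avint[of m] not_dvd_imp_multiplicity_0[OF that] p1 by simp
  qed
  have av0: "av 0 = 0" using C by blast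
  have one: "av 1 = 1" using unit[of 1] p1 by simp
  have mone: "av (-1) = 1" using unit[of "-1"] p1 by simp
  have two: "av 2 = 1"
  proof -
    have "\<not> int p dvd 2" using p3 by (auto dest: zdvd_imp_le)
    then show ?thesis using unit[of 2] by simp
  qed
  have natle: "av (of_nat m) \<le> 1" for m
  proof (cases "m = 0")
    case True then show ?thesis using av0 by simp
  next
    case False
    then have "av (of_nat m) = av (of_int (int m))" by simp
    also have "\<dots> = real p powr (- real (multiplicity (int p) (int m)))" using avint[of "int m"] False by simp
    also have "\<dots> \<le> real p powr 0" using p1 by (intro powr_mono) auto
    finally show ?thesis using p1 by simp
  qed
  have pdvd: "av (of_nat m) \<le> 1 / real p" if "p dvd m" for m
  proof (cases "m = 0")
    case True then show ?thesis using av0 by simp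
  next
    case False
    have "int p ^ 1 dvd int m" using that by simp
    then have mg: "multiplicity (int p) (int m) \<ge> 1" using False p1 by (intro multiplicity_geI) auto
    have "av (of_nat m) = av (of_int (int m))" by simp
    also have "\<dots> = real p powr (- real (multiplicity (int p) (int m)))" using avint[of "int m"] False by simp
    also have "\<dots> \<le> real p powr (-1)" using p1 mg by (intro powr_mono) auto
    finally show ?thesis using p1 by (simp add: powr_minus_divide)
  qed
  interpret nav av p
    by unfold_locales (use C one mone two natle pdvd p1 in auto)
  have "real p powr (- 1 / (real p - 1)) < 1" using p1 by (intro powr_less_one) auto
  then have hq: "av (q - 1) < 1" using assms(4) av_diff_sym by simp
  interpret qctx av p q n
    by unfold_locales (use assms(1,2) hq in auto)
  show ?thesis
    by (rule main) (use C in blast)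
qed


end
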